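(* Let $n\ge1$. For every rectangular permutation $\pi\in S_n$ there is exactly one pair $(x,\sigma)$ with $x\in\{1,2,u,d\}$ and $\sigma$ a rectangular permutation in $S_{n-1}$ lying in the domain of $\psi_x$, such that $\pi=\psi_x(\sigma)$.
   Context: A permutation is rectangular if it avoids the patterns $2413,2431,4213,4231$; $S_0=\{e_0\}$ contains only the empty permutation. For $\pi\in S_n$ (one-line form) and $1\le i,j\le n+1$, $\rho_{i,j}(\pi)\in S_{n+1}$ is obtained by increasing by $1$ every entry $\ge i$ and inserting the value $i$ at position $j$. Operators: $\psi_1=\rho_{1,1}$, domain all rectangular permutations (including $e_0$); $\psi_2=\rho_{1,2}$, domain rectangular $\pi$ of size $\ge1$ with $\pi_1\ne1$; $\psi_u(\pi)=\rho_{\pi_1,1}(\pi)$, domain rectangular $\pi$ of size $\ge1$ with $\pi_1\neq1$; $\psi_d(\pi)=\rho_{\pi_1+1,1}(\pi)$, domain rectangular $\pi$ of size $\ge1$. *)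

theory Defs
  imports Main
begin

text \<open>Permutations in one-line notation are lists of natural numbers;
a permutation in S_n is a list which is a rearrangement of 1,...,n.
The empty list is the empty permutation e_0.\<close>

definition is_perm :: "nat \<Rightarrow> nat list \<Rightarrow> bool" where
  "is_perm n xs \<longleftrightarrow> length xs = n \<and> distinct xs \<and> set xs = {1..n}"

definition contains :: "nat list \<Rightarrow> nat list \<Rightarrow> bool" where
  "contains xs p \<longleftrightarrow>
     (\<exists>idx :: nat list. length idx = length p \<and> sorted_wrt (<) idx
        \<and> (\<forall>k\<in>set idx. k < length xs)
        \<and> (\<forall>a<length p. \<forall>b<length p. (xs ! (idx ! a) < xs ! (idx ! b)) \<longleftrightarrow> (p ! a < p ! b)))"

definition avoids :: "nat list \<Rightarrow> nat list \<Rightarrow> bool" where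
  "avoids xs p \<longleftrightarrow> \<not> contains xs p"

definition rectangular :: "nat list \<Rightarrow> bool" where
  "rectangular xs \<longleftrightarrow> avoids xs [2,4,1,3] \<and> avoids xs [2,4,3,1]
      \<and> avoids xs [4,2,1,3] \<and> avoids xs [4,2,3,1]"

text \<open>rho i j pi: increase by 1 every entry >= i and insert the value i at
position j (1-based), for 1 <= i,j <= n+1.\<close>

definition rho :: "nat \<Rightarrow> nat \<Rightarrow> nat list \<Rightarrow> nat list" where
  "rho i j xs = (let ys = map (\<lambda>v. if i \<le> v then v + 1 else v) xs
                 in take (j - 1) ys @ [i] @ drop (j - 1) ys)"

datatype op = Op1 | Op2 | OpU | OpD

fun psi :: "op \<Rightarrow> nat list \<Rightarrow> nat list" where
  "psi Op1 xs = rho 1 1 xs"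
| "psi Op2 xs = rho 1 2 xs"
| "psi OpU xs = rho (hd xs) 1 xs"
| "psi OpD xs = rho (hd xs + 1) 1 xs"

fun in_dom :: "op \<Rightarrow> nat list \<Rightarrow> bool" where
  "in_dom Op1 xs = rectangular xs"
| "in_dom Op2 xs = (rectangular xs \<and> length xs \<ge> 1 \<and> hd xs \<noteq> 1)"
| "in_dom OpU xs = (rectangular xs \<and> length xs \<ge> 1 \<and> hd xs \<noteq> 1)"
| "in_dom OpD xs = (rectangular xs \<and> length xs \<ge> 1)"

end

theory Submission imports Defs begin

definition inc :: "nat \<Rightarrow> nat \<Rightarrow> nat" where "inc i = (\<lambda>v. if i \<le> v then v + 1 else v)"
definition dec :: "nat \<Rightarrow> nat \<Rightarrow> nat" where "dec i v = (if i < v then v - 1 else v)"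

lemma rho_alt: "rho i j xs = take (j-1) (map (inc i) xs) @ i # drop (j-1) (map (inc i) xs)"
  unfolding rho_def inc_def Let_def by simp

lemma dec_inc[simp]: "dec i (inc i v) = v" by (simp add: dec_def inc_def)
lemma inc_dec: "v \<noteq> i \<Longrightarrow> inc i (dec i v) = v" by (auto simp: dec_def inc_def)
lemma inc_mono: "strict_mono (inc i)" by (rule strict_monoI) (auto simp: inc_def)

lemma contains_map:
  assumes "strict_mono f" "contains xs p" shows "contains (map f xs) p"
proof -
  from assms(2) obtain idx where h: "length idx = length p" "sorted_wrt (<) idx"
    "\<forall>k\<in>set idx. k < length xs"
    "\<forall>a<length p. \<forall>b<length p. (xs ! (idx ! a) < xs ! (idx ! b)) \<longleftrightarrow> (p ! a < p ! b)"
    unfolding contains_def by blast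
  have "\<forall>a<length p. \<forall>b<length p. (map f xs ! (idx ! a) < map f xs ! (idx ! b)) \<longleftrightarrow> (p ! a < p ! b)"
    using h assms(1) by (simp add: strict_mono_less)
  with h show ?thesis unfolding contains_def by (intro exI[of _ idx]) auto
qed

lemma contains_del:
  assumes "contains (take k xs @ drop (Suc k) xs) p" "k < length xs" shows "contains xs p"
proof -
  let ?zs = "take k xs @ drop (Suc k) xs"
  define g where "g m = (if m < k then m else Suc m)" for m
  have zs: "?zs ! m = xs ! g m" if "m < length ?zs" for m
    using that assms(2) by (auto simp: g_def nth_append)
  have gm: "strict_mono g" by (rule strict_monoI) (auto simp: g_def)
  from assms(1) obtain idx where h: "length idx = length p" "sorted_wrt (<) idx"
    "\<forall>k\<in>set idx. k < length ?zs"
    "\<forall>a<length p. \<forall>b<length p. (?zs ! (idx ! a) < ?zs ! (idx ! b)) \<longleftrightarrow> (p ! a < p ! b)"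
    unfolding contains_def by blast
  have 1: "sorted_wrt (<) (map g idx)" using h(2) gm
    by (auto simp: sorted_wrt_map intro: sorted_wrt_mono_rel[OF _ h(2)] dest: strict_mono_less[THEN iffD2])
  have 2: "\<forall>k\<in>set (map g idx). k < length xs" using h(3) assms(2) by (auto simp: g_def)
  have 3: "\<forall>a<length p. \<forall>b<length p. (xs ! (map g idx ! a) < xs ! (map g idx ! b)) \<longleftrightarrow> (p ! a < p ! b)"
  proof (intro allI impI)
    fix a b assume ab: "a < length p" "b < length p"
    then have "idx ! a \<in> set idx" "idx ! b \<in> set idx" using h(1) by auto
    then show "(xs ! (map g idx ! a) < xs ! (map g idx ! b)) \<longleftrightarrow> (p ! a < p ! b)"
      using h(1,3,4) ab zs by auto
  qed
  show ?thesis unfolding contains_def using 1 2 3 h(1) by (intro exI[of _ "map g idx"]) auto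
qed

lemma rect_rho:
  assumes "rectangular (rho i j s)" "j - 1 \<le> length s" shows "rectangular s"
proof -
  let ?xs = "rho i j s"
  have e: "take (j-1) ?xs @ drop (Suc (j-1)) ?xs = map (inc i) s" and l: "j - 1 < length ?xs"
    using assms(2) by (auto simp: rho_alt)
  have c: "contains s p \<Longrightarrow> contains ?xs p" for p
    using contains_del[OF _ l] contains_map[OF inc_mono] e by metis
  show ?thesis using assms(1) c unfolding rectangular_def avoids_def by blast
qed

definition recov :: "nat \<Rightarrow> nat list \<Rightarrow> nat list" where
  "recov k p = map (dec (p ! k)) (take k p @ drop (Suc k) p)"

lemma recov_rho: "k \<le> length s \<Longrightarrow> recov k (rho i (Suc k) s) = s"
  by (simp add: recov_def rho_alt nth_append map_idI)

lemma perm_recov: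
  assumes "is_perm n p" "k < n"
  shows "is_perm (n-1) (recov k p) \<and> rho (p ! k) (Suc k) (recov k p) = p"
proof -
  let ?i = "p ! k" let ?ys = "take k p @ drop (Suc k) p"
  have len: "length p = n" "distinct p" "set p = {1..n}" using assms(1) by (auto simp: is_perm_def)
  have dec: "p = take k p @ ?i # drop (Suc k) p" using assms(2) len(1) by (simp add: id_take_nth_drop)
  have dd: "distinct (take k p @ ?i # drop (Suc k) p)" using len(2) dec by metis
  then have d: "distinct ?ys" "?i \<notin> set ?ys" by auto
  have sp: "set p = insert ?i (set ?ys)" by (subst dec) auto
  have iin: "?i \<in> {1..n}" using len assms(2) by (metis nth_mem)
  have sy: "set ?ys = {1..n} - {?i}" using sp d(2) len(3) by auto
  have inj: "inj_on (dec ?i) (set ?ys)"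
  proof (rule inj_on_inverseI[where g="inc ?i"])
    fix x assume "x \<in> set ?ys" then have "x \<noteq> ?i" using d(2) by blast
    then show "inc ?i (dec ?i x) = x" by (rule inc_dec)
  qed
  have dist: "distinct (recov k p)" unfolding recov_def distinct_map using d(1) inj by blast
  have "dec ?i ` ({1..n} - {?i}) = {1..n-1}"
  proof
    show "dec ?i ` ({1..n} - {?i}) \<subseteq> {1..n-1}" using iin by (auto simp: dec_def)
    show "{1..n-1} \<subseteq> dec ?i ` ({1..n} - {?i})"
    proof
      fix w assume w: "w \<in> {1..n-1}"
      show "w \<in> dec ?i ` ({1..n} - {?i})"
      proof (cases "w < ?i")
        case True then show ?thesis using w iin by (intro image_eqI[of _ _ w]) (auto simp: dec_def)
      next
        case False then show ?thesis using w iin by (intro image_eqI[of _ _ "Suc w"]) (auto simp: dec_def)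
      qed
    qed
  qed
  then have st: "set (recov k p) = {1..n-1}" unfolding recov_def set_map sy by simp
  have ln: "length (recov k p) = n - 1" unfolding recov_def using len assms(2) by simp
  have m: "map (inc ?i) (recov k p) = ?ys" unfolding recov_def map_map
    by (rule map_idI) (metis comp_apply inc_dec d(2))
  have "rho ?i (Suc k) (recov k p) = p"
    unfolding rho_alt m using assms(2) len(1) dec by (simp add: min_def)
  with dist st ln show ?thesis by (simp add: is_perm_def)
qed

lemma all4: "(\<forall>a<(4::nat). P a) \<longleftrightarrow> P 0 \<and> P 1 \<and> P 2 \<and> P 3"
  by (auto simp: numeral_eq_Suc less_Suc_eq)

lemma contains4:
  assumes "i0 < i1" "i1 < i2" "i2 < i3" "i3 < length xs"
    "\<forall>a<4. \<forall>b<4. (xs ! ([i0,i1,i2,i3] ! a) < xs ! ([i0,i1,i2,i3] ! b)) \<longleftrightarrow> (p ! a < p ! b)"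
    "length p = 4"
  shows "contains xs p"
  unfolding contains_def using assms by (intro exI[of _ "[i0,i1,i2,i3]"]) auto

lemma key:
  assumes "is_perm n p" "rectangular p" "n \<ge> 2" "p ! 0 \<ge> 2"
  shows "p ! 1 = 1 \<or> p ! 1 = p ! 0 + 1 \<or> p ! 1 = p ! 0 - 1"
proof (rule ccontr)
  assume nb: "\<not> ?thesis"
  let ?a = "p ! 0" let ?b = "p ! 1"
  have len: "length p = n" "distinct p" "set p = {1..n}" using assms(1) by (auto simp: is_perm_def)
  have a0: "?a \<in> set p" "?b \<in> set p" using len(1) assms(3) by auto
  have ab: "?a \<in> {1..n}" "?b \<in> {1..n}" using a0 len(3) by auto
  have ab3: "?a \<noteq> ?b" using len assms(3) by (simp add: nth_eq_iff_index_eq)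
  obtain k where k: "k < n" "p ! k = 1" using len by (metis atLeastAtMost_iff in_set_conv_nth le_refl one_le_numeral assms(3) order_trans)
  have k2: "k \<ge> 2" using k nb assms(4) by (cases k; cases "k - 1"; auto)
  show False
  proof (cases "?b > ?a")
    case True
    have bb: "?b > ?a + 1" using True nb by auto
    then have "?a + 1 \<in> set p" using len ab nb by auto
    then obtain m where m: "m < n" "p ! m = ?a + 1" using len by (metis in_set_conv_nth)
    have m2: "m \<ge> 2" using m nb by (cases m; cases "m - 1"; auto)
    have km: "k \<noteq> m" using k m assms(4) by auto
    show False
    proof (cases "k < m")
      case True
      have c: "\<forall>a<4. \<forall>b<4. (p ! ([0,1,k,m] ! a) < p ! ([0,1,k,m] ! b)) \<longleftrightarrow> ([2::nat,4,1,3] ! a < [2,4,1,3] ! b)"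
        using k(2) m(2) assms(4) bb by (simp add: all4)
      have "contains p [2,4,1,3]"
        by (rule contains4[OF _ _ _ _ c]) (use True k2 m(1) len(1) in auto)
      then show False using assms(2) by (simp add: rectangular_def avoids_def)
    next
      case False
      have c: "\<forall>a<4. \<forall>b<4. (p ! ([0,1,m,k] ! a) < p ! ([0,1,m,k] ! b)) \<longleftrightarrow> ([2::nat,4,3,1] ! a < [2,4,3,1] ! b)"
        using k(2) m(2) assms(4) bb by (simp add: all4)
      have "contains p [2,4,3,1]"
        by (rule contains4[OF _ _ _ _ c]) (use False km m2 k(1) len(1) in auto)
      then show False using assms(2) by (simp add: rectangular_def avoids_def)
    qed
  next
    case False
    have bb: "?b + 1 < ?a" "?b \<ge> 2" using False nb ab ab3 by auto
    then have "?a - 1 \<in> set p" using len ab nb by auto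
    then obtain m where m: "m < n" "p ! m = ?a - 1" using len by (metis in_set_conv_nth)
    have m2: "m \<ge> 2" using m nb ab by (cases m; cases "m - 1"; auto)
    have km: "k \<noteq> m" using k m bb by auto
    show False
    proof (cases "k < m")
      case True
      have c: "\<forall>a<4. \<forall>b<4. (p ! ([0,1,k,m] ! a) < p ! ([0,1,k,m] ! b)) \<longleftrightarrow> ([4::nat,2,1,3] ! a < [4,2,1,3] ! b)"
        using k(2) m(2) bb by (simp add: all4; linarith)
      have "contains p [4,2,1,3]"
        by (rule contains4[OF _ _ _ _ c]) (use True k2 m(1) len(1) in auto)
      then show False using assms(2) by (simp add: rectangular_def avoids_def)
    next
      case False
      have c: "\<forall>a<4. \<forall>b<4. (p ! ([0,1,m,k] ! a) < p ! ([0,1,m,k] ! b)) \<longleftrightarrow> ([4::nat,2,3,1] ! a < [4,2,3,1] ! b)"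
        using k(2) m(2) bb by (simp add: all4; linarith)
      have "contains p [4,2,3,1]"
        by (rule contains4[OF _ _ _ _ c]) (use False km m2 k(1) len(1) in auto)
      then show False using assms(2) by (simp add: rectangular_def avoids_def)
    qed
  qed
qed

definition cls :: "nat list \<Rightarrow> op" where
  "cls p = (if p!0 = 1 then Op1 else if p!1 = p!0+1 then OpU else if p!1 = p!0 - 1 then OpD else Op2)"
definition jx :: "op \<Rightarrow> nat" where "jx x = (if x = Op2 then 1 else 0)"

lemma psi_props:
  assumes "is_perm m s" "in_dom x s" "p = psi x s"
  shows "cls p = x \<and> s = recov (jx x) p"
proof (cases x)
  case Op1
  then have "p = rho 1 (Suc 0) s" using assms(3) by simp
  then show ?thesis using Op1 recov_rho[of 0 s 1] by (simp add: cls_def jx_def rho_alt)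
next
  case Op2
  then obtain c t where s: "s = c # t" "c \<noteq> 1" using assms(2) by (cases s) auto
  have "c \<in> {1..m}" using assms(1) s by (auto simp: is_perm_def)
  then have c: "c \<ge> 2" using s by auto
  have p: "p = rho 1 (Suc 1) s" using assms(3) Op2 by (simp add: numeral_2_eq_2)
  then have "p ! 0 = c + 1" "p ! 1 = 1" using c s by (auto simp: rho_alt inc_def)
  then have "cls p = Op2" using c by (simp add: cls_def)
  then show ?thesis using Op2 recov_rho[of 1 s 1] p s by (simp add: jx_def)
next
  case OpU
  then obtain c t where s: "s = c # t" "c \<noteq> 1" using assms(2) by (cases s) auto
  have "c \<in> {1..m}" using assms(1) s by (auto simp: is_perm_def)
  then have c: "c \<ge> 2" using s by auto
  have p: "p = rho c (Suc 0) s" using assms(3) OpU s by simp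
  then have "p ! 0 = c" "p ! 1 = c + 1" using c s by (auto simp: rho_alt inc_def)
  then have "cls p = OpU" using c by (simp add: cls_def)
  then show ?thesis using OpU recov_rho[of 0 s c] p s by (simp add: jx_def)
next
  case OpD
  then obtain c t where s: "s = c # t" using assms(2) by (cases s) auto
  have "c \<in> {1..m}" using assms(1) s by (auto simp: is_perm_def)
  then have c: "c \<ge> 1" using s by auto
  have p: "p = rho (c+1) (Suc 0) s" using assms(3) OpD s by simp
  then have "p ! 0 = c + 1" "p ! 1 = c" using c s by (auto simp: rho_alt inc_def)
  then have "cls p = OpD" using c by (simp add: cls_def)
  then show ?thesis using OpD recov_rho[of 0 s "c+1"] p s by (simp add: jx_def)
qed

lemma existence:
  assumes "n \<ge> 1" "is_perm n p" "rectangular p"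
  shows "\<exists>x s. is_perm (n - 1) s \<and> rectangular s \<and> in_dom x s \<and> p = psi x s"
proof -
  have len: "length p = n" "set p = {1..n}" using assms(2) by (auto simp: is_perm_def)
  have rs: "rectangular (recov k p)" if "k < n" for k
    using perm_recov[OF assms(2) that] rect_rho[of "p ! k" "Suc k" "recov k p"] assms(3) len that
    by (simp add: is_perm_def)
  show ?thesis
  proof (cases "p ! 0 = 1")
    case True
    have P: "is_perm (n-1) (recov 0 p)" "rho 1 (Suc 0) (recov 0 p) = p"
      using perm_recov[OF assms(2), of 0] assms(1) True by auto
    show ?thesis using P rs[of 0] assms(1)
      by (intro exI[of _ Op1] exI[of _ "recov 0 p"]) auto
  next
    case False
    have p00: "p ! 0 \<in> set p" using len assms(1) by (intro nth_mem) simp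
    then have p0: "p ! 0 \<in> {1..n}" using len by blast
    have n2: "n \<ge> 2"
    proof (rule ccontr)
      assume "\<not> n \<ge> 2" then have "n = 1" using assms(1) by auto
      then show False using p0 len False by auto
    qed
    have a2: "p ! 0 \<ge> 2" using p0 len False by auto
    obtain a b t where pe: "p = a # b # t" using len n2 by (cases p; cases "tl p") auto
    have ab: "p ! 0 = a" "p ! 1 = b" using pe by auto
    have kk: "b = 1 \<or> b = a + 1 \<or> b = a - 1" using key[OF assms(2,3) n2 a2] ab by simp
    have P0: "is_perm (n-1) (recov 0 p)" "rho a (Suc 0) (recov 0 p) = p"
      using perm_recov[OF assms(2), of 0] assms(1) ab by auto
    have r0: "recov 0 p = map (dec a) (b # t)" using pe by (simp add: recov_def)
    have l0: "length (recov 0 p) \<ge> 1" using r0 by simp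
    show ?thesis
    proof (cases "b = a + 1")
      case True
      have "hd (recov 0 p) = a" using r0 True by (simp add: dec_def)
      then show ?thesis using P0 rs[of 0] assms(1) l0 a2 ab(1)
        by (intro exI[of _ OpU] exI[of _ "recov 0 p"]) auto
    next
      case F1: False
      show ?thesis
      proof (cases "b = a - 1")
        case True
        have "hd (recov 0 p) = a - 1" using r0 True a2 by (simp add: dec_def)
        then show ?thesis using P0 rs[of 0] assms(1) l0 a2 ab(1)
          by (intro exI[of _ OpD] exI[of _ "recov 0 p"]) auto
      next
        case False
        then have b1: "b = 1" "a \<ge> 3" using kk F1 a2 ab(1) by auto
        have P1: "is_perm (n-1) (recov 1 p)" "rho 1 (Suc 1) (recov 1 p) = p"
          using perm_recov[OF assms(2), of 1] n2 ab b1 by auto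
        have r1: "recov 1 p = map (dec 1) (a # t)" using pe b1 by (simp add: recov_def)
        have "hd (recov 1 p) \<noteq> 1" "length (recov 1 p) \<ge> 1" using r1 b1 by (auto simp: dec_def)
        then show ?thesis using P1 rs[of 1] n2
          by (intro exI[of _ Op2] exI[of _ "recov 1 p"]) (auto simp: numeral_2_eq_2)
      qed
    qed
  qed
qed

theorem lemma4p2:
  fixes n :: nat and \<pi> :: "nat list"
  assumes "n \<ge> 1" and "is_perm n \<pi>" and "rectangular \<pi>"
  shows "\<exists>!(x, \<sigma>). is_perm (n - 1) \<sigma> \<and> rectangular \<sigma> \<and> in_dom x \<sigma> \<and> \<pi> = psi x \<sigma>"
proof -
  obtain x0 s0 where h0: "is_perm (n - 1) s0" "rectangular s0" "in_dom x0 s0" "\<pi> = psi x0 s0"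
    using existence[OF assms] by blast
  have u0: "cls \<pi> = x0 \<and> s0 = recov (jx x0) \<pi>" using psi_props[OF h0(1,3,4)] .
  show ?thesis
  proof (rule ex1I[of _ "(x0, s0)"])
    show "case (x0, s0) of (x, \<sigma>) \<Rightarrow> is_perm (n - 1) \<sigma> \<and> rectangular \<sigma> \<and> in_dom x \<sigma> \<and> \<pi> = psi x \<sigma>"
      using h0 by simp
  next
    fix z assume "case z of (x, \<sigma>) \<Rightarrow> is_perm (n - 1) \<sigma> \<and> rectangular \<sigma> \<and> in_dom x \<sigma> \<and> \<pi> = psi x \<sigma>"
    then obtain x s where z: "z = (x, s)" "is_perm (n - 1) s" "in_dom x s" "\<pi> = psi x s"
      by (cases z) auto
    have "cls \<pi> = x \<and> s = recov (jx x) \<pi>" using psi_props[OF z(2,3,4)] .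
    then show "z = (x0, s0)" using u0 z(1) by auto
  qed
qed

end
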